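(* For any $\lambda>0$ there exists an exponential set $\mathcal Y$ of positive words over the alphabet $\{a,b\}$ with the following properties: ( * ) If $V$ is a subword of some $W\in\mathcal Y$ and $|V|\ge\lambda|W|$, then $V$ occurs in $W$ as a subword only once; and if this $V$ is also a subword of some $U\in\mathcal Y$, then $U\equiv W$. ( ** ) Every word in $\mathcal Y$ is $7$-aperiodic.
   Context: $|W|$ is the length of a word $W$; $U\equiv V$ means letter-by-letter equality of words. A positive word over $\{a,b\}$ is a word in the letters $a,b$ (no inverse letters). A reduced word is $s$-aperiodic if it contains no subword of the form $Y^s$ with $Y$ a non-empty word. A set $\mathcal Y$ of words is exponential if there exist constants $C$ and $c>1$ such that $\#\{Y\in\mathcal Y:|Y|\le i\}\ge c^i$ for every $i\ge C$. *)

theory Defs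
  imports Complex_Main "HOL-Library.Sublist"
begin

text \<open>The two-letter alphabet; positive words are lists over it.\<close>
datatype letter = a | b

type_synonym word = "letter list"

text \<open>Subword = contiguous factor: library notion sublist.
  Number of occurrences of V as a subword of W (starting positions).\<close>
definition occurrences :: "word \<Rightarrow> word \<Rightarrow> nat" where
  "occurrences V W = card {i. i + length V \<le> length W \<and> take (length V) (drop i W) = V}"

definition aperiodic :: "nat \<Rightarrow> word \<Rightarrow> bool" where
  "aperiodic s W \<longleftrightarrow> \<not> (\<exists>Y. Y \<noteq> [] \<and> sublist (concat (replicate s Y)) W)"

definition exponential :: "word set \<Rightarrow> bool" where
  "exponential \<Y> \<longleftrightarrow> (\<exists>(C::nat) (c::real). c > 1 \<and>
     (\<forall>i\<ge>C. real (card {Y \<in> \<Y>. length Y \<le> i}) \<ge> c ^ i))"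

end

theory Submission
  imports Defs
begin


definition gg :: "nat \<Rightarrow> nat" where
  "gg e = (LEAST l. (3/2::real)^l \<ge> 10 * (real e + 1) * (real e + 2))"

lemma gg_ex: "\<exists>l. (3/2::real)^l \<ge> y"
proof -
  obtain n where "y < (3/2::real)^n" using real_arch_pow[of "3/2" y] by auto
  thus ?thesis by (auto intro: less_imp_le)
qed

lemma gg_prop: "(3/2::real)^(gg e) \<ge> 10 * (real e + 1) * (real e + 2)"
  unfolding gg_def by (rule LeastI_ex[OF gg_ex])

lemma gg_le: "(3/2::real)^l \<ge> 10 * (real e + 1) * (real e + 2) \<Longrightarrow> gg e \<le> l"
  unfolding gg_def by (rule Least_le)

lemma gg_mono: "e \<le> e' \<Longrightarrow> gg e \<le> gg e'"
proof -
  assume "e \<le> e'"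
  hence "10 * (real e + 1) * (real e + 2) \<le> 10 * (real e' + 1) * (real e' + 2)"
    by (intro mult_mono) auto
  thus ?thesis using gg_prop[of e'] by (intro gg_le) linarith
qed

lemma gg_pos: "gg e \<ge> 1"
proof (rule ccontr)
  assume "\<not> gg e \<ge> 1"
  hence "gg e = 0" by simp
  have h2: "1*2 \<le> (real e + 1) * (real e + 2)" by (rule mult_mono) auto
  have "(3/2::real)^(gg e) \<ge> 10 * ((real e+1)*(real e+2))" using gg_prop[of e] by (metis mult.assoc)
  thus False using h2 \<open>gg e = 0\<close> by simp
qed

lemma gg_inv: "(2/3::real)^(gg e) \<le> 1 / (10 * (real e + 1) * (real e + 2))"
proof -
  have pos: "0 < 10 * (real e + 1) * (real e + 2)" by simp
  have "(2/3::real)^(gg e) = 1 / (3/2)^(gg e)" by (simp add: power_divide)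
  also have "\<dots> \<le> 1 / (10 * (real e + 1) * (real e + 2))"
    apply (rule divide_left_mono[OF gg_prop[of e]])
     apply simp
    apply (rule mult_pos_pos) using pos by auto
  finally show ?thesis .
qed

lemma gg_bound2: "10 * (e+1) * (e+2) \<le> (2::nat)^k \<Longrightarrow> gg e \<le> 2*k"
proof -
  assume h: "10 * (e+1) * (e+2) \<le> (2::nat)^k"
  have "10 * (real e + 1) * (real e + 2) = real (10 * (e+1) * (e+2))" by (simp only: of_nat_mult of_nat_add of_nat_1 of_nat_numeral)
  also have "\<dots> \<le> real ((2::nat)^k)" using h by linarith
  also have "\<dots> = (2::real)^k" by simp
  also have "\<dots> \<le> (9/4)^k" by (intro power_mono) auto
  also have "\<dots> = (3/2)^(2*k)" by (simp add: power_mult power2_eq_square)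
  finally show ?thesis by (rule gg_le)
qed

definition PP :: "word \<Rightarrow> bool" where
  "PP w \<longleftrightarrow> (\<forall>p j. 0<j \<and> p + 7*j \<le> length w \<longrightarrow> \<not>(\<forall>i<6*j. w!(p+j+i) = w!(p+i))) \<and>
     (\<forall>p q l. p<q \<and> q+l \<le> length w \<and> gg(p+l) \<le> l \<longrightarrow> \<not>(\<forall>i<l. w!(q+i) = w!(p+i)))"

lemma PP_take: "PP w \<Longrightarrow> PP (take m w)"
  unfolding PP_def
proof (intro conjI allI impI notI)
  fix p j
  assume h: "(\<forall>p j. 0 < j \<and> p + 7 * j \<le> length w \<longrightarrow> \<not> (\<forall>i<6 * j. w ! (p + j + i) = w ! (p + i))) \<and>
    (\<forall>p q l. p < q \<and> q + l \<le> length w \<and> gg (p + l) \<le> l \<longrightarrow> \<not> (\<forall>i<l. w ! (q + i) = w ! (p + i)))"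
    and a: "0 < j \<and> p + 7 * j \<le> length (take m w)" and b: "\<forall>i<6 * j. take m w ! (p + j + i) = take m w ! (p + i)"
  have c: "\<forall>i<6 * j. w ! (p + j + i) = w ! (p + i)" using a b by auto
  have "0 < j \<and> p + 7 * j \<le> length w" using a by auto
  thus False using h c by blast
next
  fix p q l
  assume h: "(\<forall>p j. 0 < j \<and> p + 7 * j \<le> length w \<longrightarrow> \<not> (\<forall>i<6 * j. w ! (p + j + i) = w ! (p + i))) \<and>
    (\<forall>p q l. p < q \<and> q + l \<le> length w \<and> gg (p + l) \<le> l \<longrightarrow> \<not> (\<forall>i<l. w ! (q + i) = w ! (p + i)))"
    and a: "p < q \<and> q + l \<le> length (take m w) \<and> gg (p + l) \<le> l" and b: "\<forall>i<l. take m w ! (q + i) = take m w ! (p + i)"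
  have c: "\<forall>i<l. w ! (q + i) = w ! (p + i)" using a b by auto
  have "p < q \<and> q + l \<le> length w \<and> gg (p + l) \<le> l" using a by auto
  thus False using h c by blast
qed

definition idx :: "nat \<Rightarrow> nat \<Rightarrow> nat \<Rightarrow> nat" where
  "idx m d k = (if k < m then k else m - d + (k - m) mod d)"

definition perext :: "word \<Rightarrow> nat \<Rightarrow> nat \<Rightarrow> word" where
  "perext u d N = map (\<lambda>k. u ! idx (length u) d k) [0..<N]"

lemma idx_less: "0 < d \<Longrightarrow> d \<le> m \<Longrightarrow> idx m d k < m"
proof -
  assume d: "0 < d" "d \<le> m"
  define r where "r = (k-m) mod d"
  have r: "r < d" using d by (simp add: r_def)
  have "idx m d k = (if k<m then k else m - d + r)" by (simp add: idx_def r_def)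
  thus ?thesis using r d by arith
qed

lemma perext_eq:
  assumes "length w = N" "m \<le> N" "0 < d" "d \<le> m"
    and per: "\<And>k. m \<le> k \<Longrightarrow> k < N \<Longrightarrow> w!k = w!(k-d)"
  shows "w = perext (take m w) d N"
proof -
  have key: "k < N \<longrightarrow> w!k = w!(idx m d k)" for k
  proof (induction k rule: less_induct)
    case (less k)
    show ?case
    proof (cases "k < m")
      case True thus ?thesis by (simp add: idx_def)
    next
      case False
      show ?thesis
      proof
        assume kN: "k < N"
        have e1: "w!k = w!(k-d)" using per False kN by simp
        show "w!k = w!(idx m d k)"
        proof (cases "k - d < m")
          case True
          have "k - m < d" using True False by linarith
          hence "idx m d k = k - d" using False True assms(4) unfolding idx_def by simp
          thus ?thesis using e1 by simp
        next
          case False2: False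
          have km: "k - m = (k - d - m) + d" using False2 assms(3) assms(4) by arith
          have "(k - m) mod d = (k - d - m) mod d" by (subst km) simp
          hence "idx m d (k-d) = idx m d k"
            unfolding idx_def using False False2 by simp
          moreover have "w!(k-d) = w!(idx m d (k-d))" using less.IH[of "k-d"] kN assms(3) assms(4) False by auto
          ultimately show ?thesis using e1 by simp
        qed
      qed
    qed
  qed
  show ?thesis
  proof (rule nth_equalityI)
    show "length w = length (perext (take m w) d N)" using assms by (simp add: perext_def)
  next
    fix k assume "k < length w"
    hence kN: "k < N" using assms by simp
    have lt: "idx m d k < m" using idx_less assms by auto
    have "length (take m w) = m" using assms by simp
    thus "w ! k = perext (take m w) d N ! k"
      using key[of k] kN lt by (simp add: perext_def)
  qed
qed




lemma UNIV_letter: "(UNIV :: letter set) = {a, b}"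
  using letter.exhaust by auto

lemma finite_letter: "finite (UNIV :: letter set)"
  by (simp add: UNIV_letter)

definition Good :: "nat \<Rightarrow> word set" where "Good n = {w. length w = n \<and> PP w}"
definition ff :: "nat \<Rightarrow> nat" where "ff n = card (Good n)"

lemma finite_len: "finite {w :: word. length w = n}"
  using finite_lists_length_eq[OF finite_letter, of n] by simp

lemma finite_Good: "finite (Good n)"
  by (rule finite_subset[OF _ finite_len[of n]]) (auto simp: Good_def)

definition Ext :: "nat \<Rightarrow> word set" where "Ext n = {w. length w = Suc n \<and> PP (take n w)}"
definition Bad :: "nat \<Rightarrow> word set" where "Bad n = {w. length w = Suc n \<and> PP (take n w) \<and> \<not> PP w}"

lemma Ext_eq: "Ext n = (\<lambda>w. w @ [a]) ` Good n \<union> (\<lambda>w. w @ [b]) ` Good n"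
proof (rule set_eqI)
  fix w
  show "w \<in> Ext n \<longleftrightarrow> w \<in> (\<lambda>w. w @ [a]) ` Good n \<union> (\<lambda>w. w @ [b]) ` Good n"
  proof
    assume "w \<in> Ext n"
    hence l: "length w = Suc n" and p: "PP (take n w)" by (auto simp: Ext_def)
    have "w = take n w @ [w ! n]" using l by (metis hd_drop_conv_nth id_take_nth_drop lessI take_Suc_conv_app_nth take_all order_refl)
    moreover have "take n w \<in> Good n" using l p by (simp add: Good_def)
    moreover have "w ! n = a \<or> w ! n = b" by (cases "w ! n") auto
    ultimately show "w \<in> (\<lambda>w. w @ [a]) ` Good n \<union> (\<lambda>w. w @ [b]) ` Good n" by force
  next
    assume "w \<in> (\<lambda>w. w @ [a]) ` Good n \<union> (\<lambda>w. w @ [b]) ` Good n"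
    thus "w \<in> Ext n" by (auto simp: Ext_def Good_def)
  qed
qed

lemma card_Ext: "card (Ext n) = 2 * ff n"
proof -
  have "card (Ext n) = card ((\<lambda>w. w @ [a]) ` Good n) + card ((\<lambda>w. w @ [b]) ` Good n)"
    unfolding Ext_eq by (rule card_Un_disjoint) (auto simp: finite_Good)
  also have "\<dots> = ff n + ff n" unfolding ff_def
    by (subst card_image, simp add: inj_on_def, subst card_image) (auto simp: inj_on_def)
  finally show ?thesis by simp
qed

lemma finite_Ext: "finite (Ext n)" unfolding Ext_eq by (simp add: finite_Good)

lemma Ext_split: "card (Ext n) = ff (Suc n) + card (Bad n)"
proof -
  have "Ext n = Good (Suc n) \<union> Bad n"
    by (auto simp: Ext_def Good_def Bad_def PP_take)
  moreover have "Good (Suc n) \<inter> Bad n = {}" by (auto simp: Good_def Bad_def)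
  moreover have "Bad n \<subseteq> Ext n" "Good (Suc n) \<subseteq> Ext n"
    by (auto simp: Ext_def Good_def Bad_def PP_take)
  ultimately show ?thesis unfolding ff_def
    by (metis card_Un_disjoint finite_Ext finite_subset)
qed

definition JJ :: "nat \<Rightarrow> nat set" where "JJ n = {j. 0 < j \<and> 7*j \<le> Suc n}"
definition EE :: "nat \<Rightarrow> nat set" where "EE n = {e. e \<le> n \<and> gg e \<le> e}"

lemma good_take: "PP (take n w) \<Longrightarrow> m \<le> n \<Longrightarrow> length w = Suc n \<Longrightarrow> take m w \<in> Good m"
  using PP_take[of "take n w" m] by (simp add: Good_def min_def)

lemma Bad_cover: "Bad n \<subseteq> (\<Union>j\<in>JJ n. (\<lambda>u. perext u j (Suc n)) ` Good (Suc n - 6*j)) \<union>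
     (\<Union>e\<in>EE n. (\<lambda>u. perext u (Suc n - e) (Suc n)) ` Good (Suc n - gg e))"
proof
  fix w assume "w \<in> Bad n"
  hence l: "length w = Suc n" and pt: "PP (take n w)" and np: "\<not> PP w" by (auto simp: Bad_def)
  from np consider
    (pow) p j where "0<j" "p + 7*j \<le> length w" "\<forall>i<6*j. w!(p+j+i) = w!(p+i)"
  | (cp) p q l where "p<q" "q+l \<le> length w" "gg(p+l) \<le> l" "\<forall>i<l. w!(q+i) = w!(p+i)"
    unfolding PP_def by blast
  thus "w \<in> (\<Union>j\<in>JJ n. (\<lambda>u. perext u j (Suc n)) ` Good (Suc n - 6*j)) \<union>
     (\<Union>e\<in>EE n. (\<lambda>u. perext u (Suc n - e) (Suc n)) ` Good (Suc n - gg e))"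
  proof cases
    case pow
    have eq: "p + 7*j = Suc n"
    proof (rule ccontr)
      assume "p + 7*j \<noteq> Suc n"
      hence le: "p + 7*j \<le> n" using pow l by simp
      have "\<forall>i<6*j. take n w!(p+j+i) = take n w!(p+i)" using pow le by auto
      moreover have "0 < j \<and> p + 7*j \<le> length (take n w)" using le l pow by simp
      ultimately show False using pt unfolding PP_def by blast
    qed
    define m where "m = Suc n - 6*j"
    have m: "m = p + j" using eq by (simp add: m_def)
    have "w = perext (take m w) j (Suc n)"
    proof (rule perext_eq)
      fix k assume "m \<le> k" "k < Suc n"
      hence "k - m < 6*j" using eq m by simp
      hence "w!(p+j+(k-m)) = w!(p+(k-m))" using pow by blast
      moreover have "p+j+(k-m) = k" "p+(k-m) = k - j" using \<open>m \<le> k\<close> m by auto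
      ultimately show "w!k = w!(k-j)" by simp
    qed (use l m eq pow in auto)
    moreover have "take m w \<in> Good m" using good_take[OF pt _ l, of m] m eq pow by simp
    moreover have "j \<in> JJ n" using pow eq by (simp add: JJ_def)
    ultimately show ?thesis unfolding m_def by blast
  next
    case cp
    have eq: "q + l = Suc n"
    proof (rule ccontr)
      assume "q + l \<noteq> Suc n"
      hence le: "q + l \<le> n" using cp l by simp
      have "\<forall>i<l. take n w!(q+i) = take n w!(p+i)" using cp le by auto
      moreover have "p<q \<and> q + l \<le> length (take n w) \<and> gg(p+l) \<le> l" using le l cp by simp
      ultimately show False using pt unfolding PP_def by blast
    qed
    define e where "e = p + l"
    define m where "m = Suc n - gg e"
    have en: "e \<le> n" using cp eq e_def by simp
    have gl: "gg e \<le> l" using cp e_def by simp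
    have g1: "1 \<le> gg e" by (rule gg_pos)
    have "w = perext (take m w) (Suc n - e) (Suc n)"
    proof (rule perext_eq)
      fix k assume km: "m \<le> k" "k < Suc n"
      have qk: "q \<le> k" using km gl eq m_def by simp
      have "k - q < l" using eq km qk by simp
      hence "w!(q+(k-q)) = w!(p+(k-q))" using cp by blast
      moreover note qk
      moreover have "p+(k-q) = k - (Suc n - e)" using km gl eq m_def e_def cp by simp
      ultimately show "w!k = w!(k - (Suc n - e))" by simp
    qed (use l m_def en gl e_def g1 in auto)
    moreover have "take m w \<in> Good m" using good_take[OF pt _ l, of m] m_def g1 by simp
    moreover have "e \<in> EE n" using en gl e_def by (simp add: EE_def)
    ultimately show ?thesis unfolding m_def by blast
  qed
qed

lemma finite_JJ: "finite (JJ n)"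
  by (rule finite_subset[of _ "{..n}"]) (auto simp: JJ_def)

lemma finite_EE: "finite (EE n)"
  by (rule finite_subset[of _ "{..n}"]) (auto simp: EE_def)

lemma card_Bad: "card (Bad n) \<le> (\<Sum>j\<in>JJ n. ff (Suc n - 6*j)) + (\<Sum>e\<in>EE n. ff (Suc n - gg e))"
proof -
  have "card (Bad n) \<le> card ((\<Union>j\<in>JJ n. (\<lambda>u. perext u j (Suc n)) ` Good (Suc n - 6*j)) \<union>
     (\<Union>e\<in>EE n. (\<lambda>u. perext u (Suc n - e) (Suc n)) ` Good (Suc n - gg e)))"
    by (rule card_mono[OF _ Bad_cover]) (auto simp: finite_JJ finite_EE finite_Good)
  also have "\<dots> \<le> card (\<Union>j\<in>JJ n. (\<lambda>u. perext u j (Suc n)) ` Good (Suc n - 6*j)) +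
     card (\<Union>e\<in>EE n. (\<lambda>u. perext u (Suc n - e) (Suc n)) ` Good (Suc n - gg e))"
    by (rule card_Un_le)
  also have "\<dots> \<le> (\<Sum>j\<in>JJ n. card ((\<lambda>u. perext u j (Suc n)) ` Good (Suc n - 6*j))) +
     (\<Sum>e\<in>EE n. card ((\<lambda>u. perext u (Suc n - e) (Suc n)) ` Good (Suc n - gg e)))"
    by (intro add_mono card_UN_le finite_JJ finite_EE)
  also have "\<dots> \<le> (\<Sum>j\<in>JJ n. ff (Suc n - 6*j)) + (\<Sum>e\<in>EE n. ff (Suc n - gg e))"
    unfolding ff_def by (intro add_mono sum_mono card_image_le finite_Good)
  finally show ?thesis .
qed




lemma geo_eq: "(r::real) \<noteq> 1 \<Longrightarrow> (\<Sum>j\<in>{1..n}. r^j) = r*(1 - r^n)/(1-r)"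
proof (induction n)
  case 0 thus ?case by simp
next
  case (Suc n)
  have "(\<Sum>j\<in>{1..Suc n}. r^j) = (\<Sum>j\<in>{1..n}. r^j) + r^(Suc n)" by (simp add: sum.cl_ivl_Suc)
  also have "\<dots> = r*(1 - r^n)/(1-r) + r^(Suc n)" using Suc by simp
  also have "\<dots> = r*(1 - r^(Suc n))/(1-r)" using Suc.prems by (simp add: field_simps)
  finally show ?case .
qed

lemma geo_bound: "0 \<le> (r::real) \<Longrightarrow> r < 1 \<Longrightarrow> (\<Sum>j\<in>{1..n}. r^j) \<le> r/(1-r)"
proof -
  assume r: "0 \<le> r" "r < 1"
  have "(\<Sum>j\<in>{1..n}. r^j) = r*(1 - r^n)/(1-r)" using r by (intro geo_eq) auto
  also have "\<dots> \<le> r*1/(1-r)" using r by (intro divide_right_mono mult_left_mono) auto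
  finally show ?thesis by simp
qed

lemma tele_step: "(x::real) \<ge> 0 \<Longrightarrow> 1 - 1/(x+1) + 1/((x+1)*(x+2)) = 1 - 1/(x+2)"
  apply (subgoal_tac "x+1 > 0" "x+2>0") apply (simp add: divide_simps) apply (simp add: algebra_simps) by auto

lemma tele: "(\<Sum>e<N. 1/((real e+1)*(real e+2))) = 1 - 1/(real N+1)"
proof (induction N)
  case 0 thus ?case by simp
next
  case (Suc N)
  have "(\<Sum>e<Suc N. 1/((real e+1)*(real e+2))) = 1 - 1/(real N+1) + 1/((real N+1)*(real N+2))"
    using Suc by simp
  also have "\<dots> = 1 - 1/(real N + 2)"
    by (rule tele_step) simp
  finally show ?case by simp
qed

lemma PP_Nil: "PP []" by (auto simp: PP_def)

lemma ff0: "ff 0 = 1"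
proof -
  have "Good 0 = {[]}" using PP_Nil by (auto simp: Good_def)
  thus ?thesis by (simp add: ff_def)
qed

lemma ff_growth: "(\<forall>k\<le>n. real (ff k) \<le> (2/3)^(n-k) * real (ff n)) \<and> ff n \<ge> 1"
proof (induction n)
  case 0 thus ?case by (simp add: ff0)
next
  case (Suc n)
  define F where "F = real (ff n)"
  have IH: "\<And>k. k \<le> n \<Longrightarrow> real (ff k) \<le> (2/3)^(n-k) * F" using Suc F_def by auto
  have F1: "F \<ge> 1" using Suc F_def by simp
  have r6: "(2/3::real)^6 = 64/729" by (simp add: power_divide)
  have A: "(\<Sum>j\<in>JJ n. real (ff (Suc n - 6*j))) \<le> (96/665) * F"
  proof -
    have "(\<Sum>j\<in>JJ n. real (ff (Suc n - 6*j))) \<le> (\<Sum>j\<in>JJ n. (3/2) * (64/729)^j * F)"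
    proof (rule sum_mono)
      fix j assume j: "j \<in> JJ n"
      hence j1: "0 < j" "7*j \<le> Suc n" by (auto simp: JJ_def)
      have "real (ff (Suc n - 6*j)) \<le> (2/3)^(n - (Suc n - 6*j)) * F" using IH[of "Suc n - 6*j"] j1 by simp
      also have "n - (Suc n - 6*j) = Suc (6*(j-1)) - 1 + 5" using j1 by simp
      also have "(2/3::real)^(Suc (6*(j-1)) - 1 + 5) * F = (3/2) * (64/729)^j * F"
      proof -
        have "(2/3::real)^(Suc (6*(j-1)) - 1 + 5) = (2/3)^(6*(j-1)) * (2/3)^5" by (simp add: power_add)
        also have "\<dots> = (64/729)^(j-1) * (2/3)^5" by (simp add: power_mult r6)
        also have "\<dots> = (3/2) * (64/729)^j"
        proof -
          have "j = Suc (j-1)" using j1 by simp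
          then obtain i where "j = Suc i" by blast
          thus ?thesis by (simp add: power_divide)
        qed
        finally show ?thesis by simp
      qed
      finally show "real (ff (Suc n - 6*j)) \<le> (3/2) * (64/729)^j * F" .
    qed
    also have "\<dots> \<le> (\<Sum>j\<in>{1..n}. (3/2) * (64/729)^j * F)"
      by (rule sum_mono2) (use F1 in \<open>auto simp: JJ_def\<close>)
    also have "\<dots> = (3/2) * F * (\<Sum>j\<in>{1..n}. (64/729::real)^j)"
      by (simp add: sum_distrib_left algebra_simps)
    also have "\<dots> \<le> (3/2) * F * ((64/729)/(1-64/729))"
      using F1 by (intro mult_left_mono geo_bound) auto
    also have "\<dots> = (96/665) * F" by simp
    finally show ?thesis .
  qed
  have B: "(\<Sum>e\<in>EE n. real (ff (Suc n - gg e))) \<le> (3/20) * F"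
  proof -
    have "(\<Sum>e\<in>EE n. real (ff (Suc n - gg e))) \<le> (\<Sum>e\<in>EE n. (3/20) * F * (1/((real e+1)*(real e+2))))"
    proof (rule sum_mono)
      fix e assume e: "e \<in> EE n"
      hence e1: "e \<le> n" "gg e \<le> e" by (auto simp: EE_def)
      have g1: "1 \<le> gg e" by (rule gg_pos)
      have "real (ff (Suc n - gg e)) \<le> (2/3)^(n - (Suc n - gg e)) * F" using IH[of "Suc n - gg e"] g1 by simp
      also have "n - (Suc n - gg e) = gg e - 1" using e1 g1 by simp
      also have "(2/3::real)^(gg e - 1) = (3/2) * (2/3)^(gg e)"
      proof -
        obtain i where "gg e = Suc i" using g1 by (cases "gg e") auto
        thus ?thesis by simp
      qed
      also have "(3/2) * (2/3::real)^(gg e) * F \<le> (3/2) * (1 / (10 * (real e + 1) * (real e + 2))) * F"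
        using gg_inv[of e] F1 by (intro mult_right_mono mult_left_mono) auto
      also have "\<dots> = (3/20) * F * (1/((real e+1)*(real e+2)))" by (simp add: field_simps)
      finally show "real (ff (Suc n - gg e)) \<le> (3/20) * F * (1/((real e+1)*(real e+2)))" .
    qed
    also have "\<dots> \<le> (\<Sum>e<Suc n. (3/20) * F * (1/((real e+1)*(real e+2))))"
      by (rule sum_mono2) (use F1 in \<open>auto simp: EE_def\<close>)
    also have "\<dots> = (3/20) * F * (\<Sum>e<Suc n. 1/((real e+1)*(real e+2)))"
      by (simp only: sum_distrib_left)
    also have "\<dots> \<le> (3/20) * F * 1"
      using F1 by (intro mult_left_mono) (auto simp: tele)
    finally show ?thesis by simp
  qed
  have "real (card (Bad n)) \<le> (\<Sum>j\<in>JJ n. real (ff (Suc n - 6*j))) + (\<Sum>e\<in>EE n. real (ff (Suc n - gg e)))"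
    using card_Bad[of n] by (simp flip: of_nat_sum of_nat_add)
  hence bad: "real (card (Bad n)) \<le> F / 2" using A B F1 by simp
  have "real (ff (Suc n)) = 2 * F - real (card (Bad n))"
    using Ext_split[of n] card_Ext[of n] F_def by simp
  hence grow: "real (ff (Suc n)) \<ge> (3/2) * F" using bad by simp
  show ?case
  proof (intro conjI allI impI)
    show "1 \<le> ff (Suc n)" using grow F1 by simp
  next
    fix k assume k: "k \<le> Suc n"
    show "real (ff k) \<le> (2/3)^(Suc n - k) * real (ff (Suc n))"
    proof (cases "k = Suc n")
      case True thus ?thesis by simp
    next
      case False
      hence kn: "k \<le> n" using k by simp
      have "real (ff k) \<le> (2/3)^(n-k) * F" by (rule IH[OF kn])
      also have "\<dots> \<le> (2/3)^(n-k) * ((2/3) * real (ff (Suc n)))"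
        using grow by (intro mult_left_mono) auto
      also have "\<dots> = (2/3)^(Suc n - k) * real (ff (Suc n))"
        using kn by (simp add: Suc_diff_le)
      finally show ?thesis .
    qed
  qed
qed

lemma ff_pos: "ff n \<ge> 1" using ff_growth by blast




definition extb :: "word \<Rightarrow> bool" where "extb w \<longleftrightarrow> (\<forall>m. \<exists>v. length v = m \<and> PP (w @ v))"

lemma ext_Nil: "extb []"
  unfolding extb_def
proof
  fix m
  have "ff m \<ge> 1" by (rule ff_pos)
  hence "Good m \<noteq> {}" unfolding ff_def by auto
  thus "\<exists>v. length v = m \<and> PP ([] @ v)" by (auto simp: Good_def)
qed

lemma ext_step: "extb w \<Longrightarrow> extb (w@[a]) \<or> extb (w@[b])"
proof (rule ccontr)
  assume e: "extb w" and n: "\<not> (extb (w@[a]) \<or> extb (w@[b]))"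
  then obtain m1 m2 where m1: "\<forall>v. length v = m1 \<longrightarrow> \<not> PP (w@[a]@v)"
    and m2: "\<forall>v. length v = m2 \<longrightarrow> \<not> PP (w@[b]@v)" unfolding extb_def by auto
  obtain v where v: "length v = Suc (max m1 m2)" "PP (w @ v)" using e unfolding extb_def by blast
  then obtain c v' where cv: "v = c # v'" by (cases v) auto
  have l: "length v' \<ge> m1" "length v' \<ge> m2" using v cv by auto
  have t: "take (length w + 1 + k) (w @ v) = w @ [c] @ take k v'" for k using cv by simp
  show False
  proof (cases c)
    case a
    have "PP (w @ [a] @ take m1 v')" using PP_take[OF v(2), of "length w + 1 + m1"] t a by simp
    thus False using m1 l by auto
  next
    case b
    have "PP (w @ [b] @ take m2 v')" using PP_take[OF v(2), of "length w + 1 + m2"] t b by simp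
    thus False using m2 l by auto
  qed
qed

primrec xs :: "nat \<Rightarrow> word" where
  "xs 0 = []"
| "xs (Suc n) = (if extb (xs n @ [a]) then xs n @ [a] else xs n @ [b])"

lemma xs_props: "extb (xs n) \<and> length (xs n) = n"
proof (induction n)
  case 0 thus ?case by (simp add: ext_Nil)
next
  case (Suc n) thus ?case using ext_step[of "xs n"] by auto
qed

definition xw :: "nat \<Rightarrow> letter" where "xw i = xs (Suc i) ! i"

lemma xs_map: "xs n = map xw [0..<n]"
proof (induction n)
  case 0 thus ?case by simp
next
  case (Suc n)
  have "xs (Suc n) = xs n @ [xw n]"
    using xs_props[of n] unfolding xw_def by (auto simp: nth_append)
  thus ?case using Suc by simp
qed

lemma PP_xs: "PP (map xw [0..<n])"
proof -
  have "extb (xs n)" using xs_props by blast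
  then obtain v where "length v = 0" "PP (xs n @ v)" unfolding extb_def by blast
  thus ?thesis using xs_map by simp
qed

lemma Q1: "0 < j \<Longrightarrow> \<not> (\<forall>i<6*j. xw (p+j+i) = xw (p+i))"
proof
  assume j: "0 < j" and h: "\<forall>i<6*j. xw (p+j+i) = xw (p+i)"
  let ?w = "map xw [0..<p+7*j]"
  have "\<forall>i<6*j. ?w!(p+j+i) = ?w!(p+i)" using h by (auto simp: nth_map_upt)
  moreover have "0 < j \<and> p + 7*j \<le> length ?w" using j by simp
  ultimately show False using PP_xs[of "p+7*j"] unfolding PP_def by blast
qed

lemma Q2: "p < q \<Longrightarrow> gg (p+l) \<le> l \<Longrightarrow> \<not> (\<forall>i<l. xw (q+i) = xw (p+i))"
proof
  assume pq: "p < q" "gg (p+l) \<le> l" and h: "\<forall>i<l. xw (q+i) = xw (p+i)"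
  let ?w = "map xw [0..<q+l]"
  have "\<forall>i<l. ?w!(q+i) = ?w!(p+i)" using h pq by (auto simp: nth_map_upt)
  moreover have "p < q \<and> q + l \<le> length ?w \<and> gg (p+l) \<le> l" using pq by simp
  ultimately show False using PP_xs[of "q+l"] unfolding PP_def by blast
qed

lemma Q2': "p \<noteq> q \<Longrightarrow> min p q + l \<le> e \<Longrightarrow> gg e \<le> l \<Longrightarrow> \<forall>i<l. xw (q+i) = xw (p+i) \<Longrightarrow> False"
proof -
  assume h: "p \<noteq> q" "min p q + l \<le> e" "gg e \<le> l" "\<forall>i<l. xw (q+i) = xw (p+i)"
  show False
  proof (cases "p < q")
    case True
    have "gg (p+l) \<le> gg e" using h True by (intro gg_mono) simp
    thus False using Q2[OF True, of l] h by simp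
  next
    case False
    hence qp: "q < p" using h by simp
    have "gg (q+l) \<le> gg e" using h qp by (intro gg_mono) simp
    thus False using Q2[OF qp, of l] h by simp
  qed
qed




lemma step4: "(18::nat) \<le> r \<Longrightarrow> (r+1)^4 \<le> 2 * r^4"
proof -
  assume r: "18 \<le> r"
  have "(r+1)^4 = r^4+4*r^3+6*r^2+4*r+1" by (simp add: power_def algebra_simps eval_nat_numeral)
  moreover have "r^4 = r * r^3" by (simp add: eval_nat_numeral)
  moreover have "18 * r^3 \<le> r * r^3" using r by simp
  moreover have "6*r^2+4*r+1 \<le> 14 * r^3"
  proof -
    have "r^2 \<le> r^3" "r \<le> r^3" "1 \<le> r^3" using r by (auto simp: eval_nat_numeral)
    thus ?thesis by linarith
  qed
  ultimately show ?thesis by linarith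
qed

lemma poly2: "(17::nat) \<le> q \<Longrightarrow> (q+1)^4 \<le> 2^q"
proof (induction q rule: dec_induct)
  case base thus ?case by simp
next
  case (step q)
  have "(Suc q + 1)^4 \<le> 2*(q+1)^4" using step4[of "q+1"] step by simp
  also have "\<dots> \<le> 2*2^q" using step by simp
  finally show ?case by simp
qed

lemma poly_exp: "\<exists>q0. \<forall>q\<ge>q0. (A::nat) * (q+1)^4 \<le> 4^q"
proof (intro exI allI impI)
  fix q assume "max 17 A \<le> q"
  hence "(q+1)^4 \<le> 2^q" "A \<le> 2^q" using poly2 by (auto intro: order_trans[OF _ less_imp_le[OF less_exp]])
  hence "A * (q+1)^4 \<le> 2^q * 2^q" by (intro mult_le_mono) auto
  also have "\<dots> = 4^q" by (simp add: power_mult_distrib[symmetric])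
  finally show "A * (q+1)^4 \<le> 4^q" .
qed

definition NN :: "nat \<Rightarrow> nat \<Rightarrow> nat" where "NN R n = 2^(n div (8*R))"
definition BB :: "nat \<Rightarrow> nat \<Rightarrow> nat" where "BB R n = (\<Sum>m<n. m * NN R m)"
definition chunk :: "nat \<Rightarrow> nat \<Rightarrow> nat \<Rightarrow> word" where
  "chunk R n j = map xw [BB R n + j*n ..< BB R n + j*n + n]"

lemma NN_pos: "NN R n \<ge> 1" by (simp add: NN_def)

lemma NN_mono: "m \<le> n \<Longrightarrow> NN R m \<le> NN R n"
  unfolding NN_def by (intro power_increasing div_le_mono) auto

lemma BB_Suc: "BB R (Suc n) = BB R n + n * NN R n" by (simp add: BB_def)

lemma BB_mono: "m \<le> n \<Longrightarrow> BB R m \<le> BB R n"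
  unfolding BB_def by (rule sum_mono2) auto

lemma BB_bound: "BB R (Suc n) \<le> (n+1)*(n+1)*NN R n"
proof -
  have "BB R (Suc n) \<le> (\<Sum>m<Suc n. n * NN R n)"
    unfolding BB_def apply (rule sum_mono) apply (rule mult_le_mono) by (auto intro: NN_mono)
  also have "\<dots> = (n+1) * (n * NN R n)" by simp
  also have "\<dots> \<le> (n+1)*((n+1)*NN R n)" by (intro mult_le_mono) auto
  also have "\<dots> = (n+1)*(n+1)*NN R n" by (simp only: mult.assoc)
  finally show ?thesis .
qed

lemma chunk_end: "j < NN R n \<Longrightarrow> BB R n + j*n + n \<le> BB R (Suc n)"
proof -
  assume "j < NN R n"
  hence "j*n + n \<le> NN R n * n" by (metis Suc_leI add.commute mult.commute mult_Suc_right mult_le_mono2)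
  thus ?thesis by (simp add: BB_Suc mult.commute)
qed

lemma chunk_len: "length (chunk R n j) = n" by (simp add: chunk_def)
lemma chunk_nth: "i < n \<Longrightarrow> chunk R n j ! i = xw (BB R n + j*n + i)" by (simp add: chunk_def)

lemma disj:
  assumes "j < NN R n" "j' < NN R n'" "BB R n + j*n \<le> s" "s < BB R n + j*n + n"
    "BB R n' + j'*n' \<le> s" "s < BB R n' + j'*n' + n'"
  shows "n = n' \<and> j = j'"
proof -
  have e1: "BB R n + j*n + n \<le> BB R (Suc n)" using chunk_end assms by blast
  have e2: "BB R n' + j'*n' + n' \<le> BB R (Suc n')" using chunk_end assms by blast
  have nn: "n = n'"
  proof (rule ccontr)
    assume "n \<noteq> n'"
    hence "Suc n \<le> n' \<or> Suc n' \<le> n" by auto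
    thus False
    proof
      assume "Suc n \<le> n'"
      hence "BB R (Suc n) \<le> BB R n'" by (rule BB_mono)
      thus False using e1 assms by linarith
    next
      assume "Suc n' \<le> n"
      hence "BB R (Suc n') \<le> BB R n" by (rule BB_mono)
      thus False using e2 assms by linarith
    qed
  qed
  have "j = j'"
  proof (rule ccontr)
    assume "j \<noteq> j'"
    hence "Suc j \<le> j' \<or> Suc j' \<le> j" by auto
    thus False
    proof
      assume "Suc j \<le> j'"
      hence "Suc j * n \<le> j' * n" by (rule mult_le_mono1)
      thus False using assms nn by simp
    next
      assume "Suc j' \<le> j"
      hence "Suc j' * n \<le> j * n" by (rule mult_le_mono1)
      thus False using assms nn by simp
    qed
  qed
  thus ?thesis using nn by simp
qed

lemma growth_bound:
  assumes R: "R \<ge> 1" and q0: "\<forall>q\<ge>q0. (90 * (8*R)^4) * (q+1)^4 \<le> 4^q" and n: "n \<ge> 8*R*q0"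
  shows "gg (BB R (Suc n)) \<le> 2 * (n div (2*R))"
proof (rule gg_bound2)
  define M where "M = 8*R"
  define q where "q = n div M"
  have M0: "M > 0" using R by (simp add: M_def)
  have qq: "q \<ge> q0" using n M0 unfolding q_def M_def by (simp add: less_eq_div_iff_mult_less_eq mult.commute)
  define E where "E = BB R (Suc n)"
  define P where "P = (n+1)*(n+1)*NN R n"
  have EP: "E \<le> P" using BB_bound unfolding E_def P_def by blast
  have P1: "1 \<le> P" using NN_pos[of R n] unfolding P_def by simp
  have "10 * (E+1) * (E+2) \<le> 10 * (3*P) * (3*P)"
    using EP P1 by (intro mult_le_mono) auto
  also have "\<dots> = 90 * ((n+1)^4) * (NN R n * NN R n)" unfolding P_def power4_eq_xxxx by algebra
  also have "NN R n * NN R n = 4^q" unfolding NN_def q_def M_def by (simp add: power_mult_distrib[symmetric])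
  also have "(n+1)^4 \<le> (M*(q+1))^4"
  proof -
    have "n = M * q + n mod M" unfolding q_def by simp
    moreover have "n mod M < M" using M0 by simp
    ultimately have "n + 1 \<le> M*(q+1)" by simp
    thus ?thesis by (rule power_mono) simp
  qed
  hence "90 * ((n+1)^4) * 4^q \<le> 90 * ((M*(q+1))^4) * 4^q" by simp
  also have "\<dots> = (90 * M^4 * (q+1)^4) * 4^q" by (simp only: power_mult_distrib mult.assoc)
  also have "\<dots> \<le> 4^q * 4^q" using q0 qq unfolding M_def by (intro mult_le_mono) auto
  also have "\<dots> = 2^(4*q)" by (simp add: power_mult power_mult_distrib[symmetric])
  also have "\<dots> \<le> 2^(n div (2*R))"
  proof (rule power_increasing)
    have "4*q*(2*R) = q * M" unfolding M_def by simp
    also have "\<dots> \<le> n" unfolding q_def by simp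
    finally show "4*q \<le> n div (2*R)" using R by (simp add: less_eq_div_iff_mult_less_eq)
  qed simp
  finally show "10 * (BB R (Suc n) + 1) * (BB R (Suc n) + 2) \<le> 2 ^ (n div (2 * R))" unfolding E_def .
qed

lemma concat_rep_Suc: "concat (replicate (Suc k) Y) = concat (replicate k Y) @ Y"
  by (induction k) auto

lemma pow7_period:
  assumes "Z = concat (replicate 7 Y)"
  shows "length Z = 7 * length Y" "\<And>i. i < 6 * length Y \<Longrightarrow> Z!(length Y + i) = Z!i"
proof -
  define Z6 where "Z6 = concat (replicate 6 Y)"
  have l6: "length Z6 = 6 * length Y" unfolding Z6_def by (simp add: length_concat sum_list_replicate)
  have z1: "Z = Y @ Z6" unfolding assms Z6_def by (simp add: numeral_eq_Suc)
  have z2: "Z = Z6 @ Y" unfolding assms Z6_def by (metis concat_rep_Suc numeral_eq_Suc add_2_eq_Suc' pred_numeral_simps)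
  show "length Z = 7 * length Y" using z1 l6 by simp
  fix i assume "i < 6 * length Y"
  hence "(Y @ Z6)!(length Y + i) = Z6 ! i" "(Z6 @ Y)!i = Z6 ! i" using l6 by (auto simp: nth_append)
  thus "Z!(length Y + i) = Z!i" using z1 z2 by metis
qed




theorem lemma1:
  fixes lam :: real
  assumes "lam > 0"
  shows "\<exists>\<Y> :: word set. exponential \<Y> \<and>
    (\<forall>W\<in>\<Y>. \<forall>V. sublist V W \<and> real (length V) \<ge> lam * real (length W) \<longrightarrow>
        occurrences V W = 1 \<and> (\<forall>U\<in>\<Y>. sublist V U \<longrightarrow> U = W)) \<and>
    (\<forall>W\<in>\<Y>. aperiodic 7 W)"
proof -
  define R where "R = max 1 (nat \<lceil>1/lam\<rceil>)"
  have R1: "R \<ge> 1" unfolding R_def by simp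
  have "real R \<ge> 1/lam" unfolding R_def by linarith
  hence Rl: "real R * lam \<ge> 1" using assms by (simp add: field_simps)
  obtain q0 where q0: "\<forall>q\<ge>q0. (90 * (8*R)^4) * (q+1)^4 \<le> 4^q" using poly_exp by blast
  define n0 where "n0 = max 1 (8*R*q0)"
  have gN: "real (gg e) \<le> lam * real n \<and> gg e \<le> n"
    if n: "n0 \<le> n" and e: "e \<le> BB R (Suc n)" for n e
  proof -
    have "gg e \<le> gg (BB R (Suc n))" using e by (intro gg_mono) simp
    also have "\<dots> \<le> 2 * (n div (2*R))" using growth_bound[OF R1 q0] n by (simp add: n0_def)
    finally have g: "gg e \<le> 2 * (n div (2*R))" .
    have m0: "n div (2*R) * (2*R) \<le> n" by simp
    have m: "2 * (n div (2*R)) * R \<le> n" using m0 by (simp add: mult_ac)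
    have "2 * (n div (2*R)) \<le> 2 * (n div (2*R)) * R" using R1 by simp
    hence "2 * (n div (2*R)) \<le> n" using m by linarith
    moreover have "real (2 * (n div (2*R))) \<le> lam * real n"
    proof -
      have "real (2 * (n div (2*R))) \<le> real (2 * (n div (2*R))) * (real R * lam)"
        using Rl by (simp add: mult_le_cancel_left1)
      also have "\<dots> = real (2 * (n div (2*R)) * R) * lam" by simp
      also have "\<dots> \<le> real n * lam"
      proof (rule mult_right_mono)
        show "real (2 * (n div (2*R)) * R) \<le> real n" using m by (simp only: of_nat_le_iff)
      qed (use assms in simp)
      finally show ?thesis by (simp add: mult.commute)
    qed
    ultimately show ?thesis using g by (smt (verit, best) of_nat_le_iff)
  qed
  define Y where "Y = {chunk R n j | n j. n0 \<le> n \<and> j < NN R n}"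
  have n01: "n0 \<ge> 1" by (simp add: n0_def)
  show ?thesis
  proof (intro exI conjI)
    show "exponential Y"
      unfolding exponential_def
    proof (intro exI conjI allI impI)
      define c where "c = (2::real) powr (1 / real (16*R))"
      show "c > 1" unfolding c_def using R1 by simp
      fix i assume i: "max n0 (16*R) \<le> i"
      have fin: "finite {Z \<in> Y. length Z \<le> i}"
        by (rule finite_subset[OF _ finite_lists_length_le[OF finite_letter, of i]]) auto
      have inj: "inj_on (chunk R i) {..<NN R i}"
      proof (rule inj_onI)
        fix j j' assume j: "j \<in> {..<NN R i}" and j': "j' \<in> {..<NN R i}" and eq: "chunk R i j = chunk R i j'"
        show "j = j'"
        proof (rule ccontr)
          assume ne: "j \<noteq> j'"
          define p where "p = BB R i + j*i"
          define q where "q = BB R i + j'*i"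
          have i1: "i \<ge> 1" using i n01 by simp
          have pq: "p \<noteq> q" using ne i1 unfolding p_def q_def by simp
          have match: "\<forall>r<i. xw (q+r) = xw (p+r)"
          proof (intro allI impI)
            fix r assume r: "r < i"
            have "chunk R i j' ! r = chunk R i j ! r" using eq by simp
            thus "xw (q+r) = xw (p+r)" using chunk_nth[OF r] unfolding p_def q_def by simp
          qed
          have e1: "p + i \<le> BB R (Suc i)" "q + i \<le> BB R (Suc i)"
            using chunk_end j j' unfolding p_def q_def by auto
          have "gg (BB R (Suc i)) \<le> i"
            using gN[of i "BB R (Suc i)"] i by simp
          moreover have "min p q + i \<le> BB R (Suc i)" using e1 by linarith
          ultimately show False using Q2'[OF pq _ _ match] by blast
        qed
      qed
      have sub: "chunk R i ` {..<NN R i} \<subseteq> {Z \<in> Y. length Z \<le> i}"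
        using i unfolding Y_def by (auto simp: chunk_len)
      have "NN R i = card (chunk R i ` {..<NN R i})" using inj by (simp add: card_image)
      also have "\<dots> \<le> card {Z \<in> Y. length Z \<le> i}" by (rule card_mono[OF fin sub])
      finally have cardb: "real (NN R i) \<le> real (card {Z \<in> Y. length Z \<le> i})" by simp
      define q where "q = i div (8*R)"
      have q2: "q \<ge> 2" using i R1 unfolding q_def by (simp add: less_eq_div_iff_mult_less_eq)
      have "i = 8*R*q + i mod (8*R)" unfolding q_def by simp
      moreover have "i mod (8*R) < 8*R" using R1 by simp
      moreover have "8*R \<le> 8*R*q" using q2 by simp
      moreover have "16*R*q = 8*R*q + 8*R*q" by simp
      ultimately have "i \<le> 16*R*q" by linarith
      hence "real i \<le> real (16*R*q)" by (simp only: of_nat_le_iff)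
      hence "real i \<le> real q * real (16*R)" by (simp add: mult_ac)
      hence iq: "real i / real (16*R) \<le> real q" using R1 by (simp add: divide_le_eq)
      have "c ^ i = c powr real i" unfolding c_def by (simp add: powr_realpow)
      also have "\<dots> = 2 powr (1 / real (16*R) * real i)" unfolding c_def by (simp add: powr_powr)
      also have "\<dots> \<le> 2 powr real q" using iq by (intro powr_mono) auto
      also have "\<dots> = real (NN R i)" unfolding NN_def q_def by (simp add: powr_realpow)
      finally show "c ^ i \<le> real (card {Z \<in> Y. length Z \<le> i})" using cardb by linarith
    qed
  next
    show "\<forall>W\<in>Y. \<forall>V. sublist V W \<and> real (length V) \<ge> lam * real (length W) \<longrightarrow>
        occurrences V W = 1 \<and> (\<forall>U\<in>Y. sublist V U \<longrightarrow> U = W)"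
    proof (intro ballI allI impI, rule conjI)
      fix W V assume WY: "W \<in> Y" and hV: "sublist V W \<and> real (length V) \<ge> lam * real (length W)"
      obtain n j where W: "W = chunk R n j" and n: "n0 \<le> n" and j: "j < NN R n" using WY unfolding Y_def by blast
      define s where "s = BB R n + j*n"
      define l where "l = length V"
      obtain ps ss where pss: "W = ps @ V @ ss" using hV unfolding sublist_def by blast
      define t where "t = length ps"
      have tl: "t + l \<le> n" using arg_cong[OF pss, of length] chunk_len[of R n j] W unfolding t_def l_def by simp
      have Vx: "V ! r = xw (s + t + r)" if "r < l" for r
      proof -
        have "W ! (t + r) = V ! r" using pss that unfolding t_def l_def by (simp add: nth_append)
        moreover have "W ! (t+r) = xw (s + (t+r))" using W chunk_nth[of "t+r" n R j] tl that unfolding s_def by simp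
        ultimately show ?thesis by (simp add: add.assoc)
      qed
      have gl: "gg (s + n) \<le> l"
      proof -
        have "real (gg (s+n)) \<le> lam * real n" using gN[OF n, of "s+n"] chunk_end[OF j] unfolding s_def by simp
        also have "\<dots> \<le> real l" using hV W chunk_len[of R n j] unfolding l_def by simp
        finally show ?thesis by simp
      qed
      have l1: "l \<ge> 1" using gl gg_pos[of "s+n"] by linarith
      show "occurrences V W = 1"
      proof -
        have "{i. i + length V \<le> length W \<and> take (length V) (drop i W) = V} = {t}"
        proof (rule set_eqI, rule iffI)
          fix i assume "i \<in> {i. i + length V \<le> length W \<and> take (length V) (drop i W) = V}"
          hence i: "i + l \<le> n" "take l (drop i W) = V" using W chunk_len unfolding l_def by auto
          have m: "\<forall>r<l. xw (s+t+r) = xw (s+i+r)"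
          proof (intro allI impI)
            fix r assume r: "r < l"
            have "V ! r = W ! (i + r)" using i(2)[symmetric] r i(1) W chunk_len[of R n j] by simp
            also have "\<dots> = xw (s + i + r)" using W chunk_nth[of "i+r" n R j] i r unfolding s_def by (simp add: add.assoc)
            finally show "xw (s+t+r) = xw (s+i+r)" using Vx r by simp
          qed
          show "i \<in> {t}"
          proof (rule ccontr)
            assume "i \<notin> {t}"
            hence "s + i \<noteq> s + t" by simp
            moreover have "min (s+i) (s+t) + l \<le> s + n" using i tl by simp
            ultimately show False using Q2'[of "s+i" "s+t" l "s+n"] gl m by blast
          qed
        next
          fix i assume "i \<in> {t}"
          thus "i \<in> {i. i + length V \<le> length W \<and> take (length V) (drop i W) = V}"
            using pss unfolding t_def by simp
        qed
        thus ?thesis unfolding occurrences_def by simp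
      qed
      show "\<forall>U\<in>Y. sublist V U \<longrightarrow> U = W"
      proof (intro ballI impI)
        fix U assume UY: "U \<in> Y" and sV: "sublist V U"
        obtain n' j' where U: "U = chunk R n' j'" and n': "n0 \<le> n'" and j': "j' < NN R n'" using UY unfolding Y_def by blast
        define s' where "s' = BB R n' + j'*n'"
        obtain ps' ss' where pss': "U = ps' @ V @ ss'" using sV unfolding sublist_def by blast
        define t' where "t' = length ps'"
        have tl': "t' + l \<le> n'" using arg_cong[OF pss', of length] chunk_len[of R n' j'] U unfolding t'_def l_def by simp
        have Vx': "V ! r = xw (s' + t' + r)" if "r < l" for r
        proof -
          have "U ! (t' + r) = V ! r" using pss' that unfolding t'_def l_def by (simp add: nth_append)
          moreover have "U ! (t'+r) = xw (s' + (t'+r))" using U chunk_nth[of "t'+r" n' R j'] tl' that unfolding s'_def by simp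
          ultimately show ?thesis by (simp add: add.assoc)
        qed
        have same: "s' + t' = s + t"
        proof (rule ccontr)
          assume ne: "s' + t' \<noteq> s + t"
          have "min (s+t) (s'+t') + l \<le> s + n" using tl by simp
          moreover have "\<forall>r<l. xw (s'+t'+r) = xw (s+t+r)" using Vx Vx' by simp
          ultimately show False using Q2'[of "s+t" "s'+t'" l "s+n"] gl ne by auto
        qed
        have "n = n' \<and> j = j'"
          by (rule disj[OF j j', of "s+t"]) (use same tl tl' l1 in \<open>auto simp: s_def s'_def\<close>)
        thus "U = W" using U W by simp
      qed
    qed
  next
    show "\<forall>W\<in>Y. aperiodic 7 W"
    proof
      fix W assume WY: "W \<in> Y"
      obtain n j where W: "W = chunk R n j" and n: "n0 \<le> n" and j: "j < NN R n" using WY unfolding Y_def by blast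
      define s where "s = BB R n + j*n"
      show "aperiodic 7 W"
        unfolding aperiodic_def
      proof
        assume "\<exists>Z. Z \<noteq> [] \<and> sublist (concat (replicate 7 Z)) W"
        then obtain Z ps ss where Z: "Z \<noteq> []" and pss: "W = ps @ concat (replicate 7 Z) @ ss"
          unfolding sublist_def by blast
        define P where "P = concat (replicate 7 Z)"
        define t where "t = length ps"
        have lP: "length P = 7 * length Z" using pow7_period(1) P_def by blast
        have tl: "t + length P \<le> n" using arg_cong[OF pss, of length] chunk_len[of R n j] W unfolding t_def P_def by simp
        have Px: "P ! r = xw (s + t + r)" if "r < length P" for r
        proof -
          have "W ! (t + r) = P ! r" using pss that unfolding t_def P_def by (simp add: nth_append)
          moreover have "W ! (t+r) = xw (s + (t+r))" using W chunk_nth[of "t+r" n R j] tl that unfolding s_def by simp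
          ultimately show ?thesis by (simp add: add.assoc)
        qed
        have "\<forall>i<6*length Z. xw (s+t+length Z+i) = xw (s+t+i)"
        proof (intro allI impI)
          fix i assume i: "i < 6 * length Z"
          have "P ! (length Z + i) = P ! i" using pow7_period(2)[OF P_def i] .
          moreover have "P ! (length Z + i) = xw (s+t+(length Z+i))" using Px lP i by simp
          moreover have "P ! i = xw (s+t+i)" using Px lP i by simp
          ultimately show "xw (s+t+length Z+i) = xw (s+t+i)" by (simp add: add.assoc)
        qed
        thus False using Q1[of "length Z" "s+t"] Z by simp
      qed
    qed
  qed
qed


end
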